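(* Let $X\in\{0,1\}$ be binary with $\Pr(X=0)>0$ and $\Pr(X=1)>0$, and let $Y_x$ be a real random variable such that for each $x'\in\{0,1\}$ the conditional cdf of $Y_x$ given $X=x'$ is strictly increasing and continuous on its support. Let $\underline{y}_x<\overline{y}_x$ denote the (possibly infinite) endpoints of the support of $Y_x$. Let $\mathcal{T}\subseteq\mathbb{R}$ and suppose $[\underline{y}_x,\overline{y}_x]\setminus\mathcal{T}$ contains a non-degenerate interval. Then there exists a latent propensity score $p:[\underline{y}_x,\overline{y}_x]\to[0,1]$ (i.e., a function such that the joint distribution of $(Y_x,X)$ with the given marginal distribution of $Y_x$ and with $\Pr(X=1\mid Y_x=y_x)=p(y_x)$ has $\Pr(X=1)$ equal to the given value) which is consistent with $\mathcal{T}$-independence of $Y_x$ from $X$, and for which the sets \[ \{y_x\in[\underline{y}_x,\overline{y}_x] : p(y_x)=0\} \quad\text{and}\quad \{y_x\in[\underline{y}_x,\overline{y}_x]: p(y_x)=1\} \] both have positive Lebesgue measure.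
   Context: $Y_x$ is $\mathcal{T}$-independent of $X$ if $F_{Y_x\mid X}(\tau\mid 0)=F_{Y_x\mid X}(\tau\mid 1)$ for all $\tau\in\mathcal{T}$, where $F_{Y_x\mid X}(\cdot\mid x')$ is the conditional cdf of $Y_x$ given $X=x'$. The latent propensity score is $p(y_x)=\Pr(X=1\mid Y_x=y_x)$. *)

theory Defs
  imports "HOL-Probability.Probability"
begin

definition marg_cdf :: "'a measure \<Rightarrow> ('a \<Rightarrow> real) \<Rightarrow> real \<Rightarrow> real" where
  "marg_cdf M Y t = measure M {\<omega>\<in>space M. Y \<omega> \<le> t}"

definition cond_cdf :: "'a measure \<Rightarrow> ('a \<Rightarrow> real) \<Rightarrow> ('a \<Rightarrow> nat) \<Rightarrow> nat \<Rightarrow> real \<Rightarrow> real" where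
  "cond_cdf M Y X x' t =
     measure M {\<omega>\<in>space M. Y \<omega> \<le> t \<and> X \<omega> = x'} / measure M {\<omega>\<in>space M. X \<omega> = x'}"

definition supp_lo :: "'a measure \<Rightarrow> ('a \<Rightarrow> real) \<Rightarrow> ereal" where
  "supp_lo M Y = Inf (ereal ` {t. marg_cdf M Y t > 0})"

definition supp_hi :: "'a measure \<Rightarrow> ('a \<Rightarrow> real) \<Rightarrow> ereal" where
  "supp_hi M Y = Sup (ereal ` {t. marg_cdf M Y t < 1})"

definition supp_set :: "'a measure \<Rightarrow> ('a \<Rightarrow> real) \<Rightarrow> real set" where
  "supp_set M Y = {t. supp_lo M Y \<le> ereal t \<and> ereal t \<le> supp_hi M Y}"

text \<open>Conditional cdfs of Y given X=1 and X=0 in the joint distribution generated by the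
  marginal of Y and the latent propensity score p, with Pr(X=1) = q.\<close>
definition latent_cdf1 :: "'a measure \<Rightarrow> ('a \<Rightarrow> real) \<Rightarrow> (real \<Rightarrow> real) \<Rightarrow> real \<Rightarrow> real \<Rightarrow> real" where
  "latent_cdf1 M Y p q t = (\<integral>\<omega>. p (Y \<omega>) * indicator {..t} (Y \<omega>) \<partial>M) / q"

definition latent_cdf0 :: "'a measure \<Rightarrow> ('a \<Rightarrow> real) \<Rightarrow> (real \<Rightarrow> real) \<Rightarrow> real \<Rightarrow> real \<Rightarrow> real" where
  "latent_cdf0 M Y p q t = (\<integral>\<omega>. (1 - p (Y \<omega>)) * indicator {..t} (Y \<omega>) \<partial>M) / (1 - q)"

definition is_latent_pscore :: "'a measure \<Rightarrow> ('a \<Rightarrow> real) \<Rightarrow> real \<Rightarrow> (real \<Rightarrow> real) \<Rightarrow> bool" where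
  "is_latent_pscore M Y q p \<longleftrightarrow>
     p \<in> borel_measurable borel \<and>
     (\<forall>y\<in>supp_set M Y. 0 \<le> p y \<and> p y \<le> 1) \<and>
     (\<integral>\<omega>. p (Y \<omega>) \<partial>M) = q"

definition latent_T_indep :: "'a measure \<Rightarrow> ('a \<Rightarrow> real) \<Rightarrow> real \<Rightarrow> (real \<Rightarrow> real) \<Rightarrow> real set \<Rightarrow> bool" where
  "latent_T_indep M Y q p T \<longleftrightarrow> (\<forall>\<tau>\<in>T. latent_cdf0 M Y p q \<tau> = latent_cdf1 M Y p q \<tau>)"

end

theory Submission
  imports Defs
begin

theorem corollary3:
  fixes M :: "'a measure" and Y :: "'a \<Rightarrow> real" and X :: "'a \<Rightarrow> nat" and T :: "real set"
  assumes "prob_space M"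
    and "Y \<in> borel_measurable M"
    and "X \<in> measurable M (count_space UNIV)"
    and "\<forall>\<omega>\<in>space M. X \<omega> \<in> {0, 1}"
    and "measure M {\<omega>\<in>space M. X \<omega> = 0} > 0"
    and "measure M {\<omega>\<in>space M. X \<omega> = 1} > 0"
    and "\<forall>x'\<in>{0, 1}. continuous_on UNIV (cond_cdf M Y X x')"
    and "\<forall>x'\<in>{0, 1}. strict_mono_on (supp_set M Y) (cond_cdf M Y X x')"
    and "supp_lo M Y < supp_hi M Y"
    and "\<exists>c d. c < d \<and> {c<..<d} \<subseteq> supp_set M Y - T"
  shows "\<exists>p. is_latent_pscore M Y (measure M {\<omega>\<in>space M. X \<omega> = 1}) p
           \<and> latent_T_indep M Y (measure M {\<omega>\<in>space M. X \<omega> = 1}) p T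
           \<and> emeasure lborel {y\<in>supp_set M Y. p y = 0} > 0
           \<and> emeasure lborel {y\<in>supp_set M Y. p y = 1} > 0"
proof -
  interpret prob_space M by (rule assms(1))
  note [measurable] = assms(2) assms(3)
  define q where "q = measure M {\<omega>\<in>space M. X \<omega> = 1}"
  define q0 where "q0 = measure M {\<omega>\<in>space M. X \<omega> = 0}"
  have q0q: "q0 = 1 - q"
  proof -
    have "space M = {\<omega>\<in>space M. X \<omega> = 0} \<union> {\<omega>\<in>space M. X \<omega> = 1}"
      using assms(4) by auto
    moreover have "measure M ({\<omega>\<in>space M. X \<omega> = 0} \<union> {\<omega>\<in>space M. X \<omega> = 1}) = q0 + q"
      unfolding q_def q0_def by (intro finite_measure_Union) auto
    ultimately show ?thesis using prob_space by simp
  qed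
  have qpos: "0 < q" and qlt: "q < 1" using assms(5,6) q0q unfolding q_def q0_def by auto
  define F where "F t = measure M {\<omega>\<in>space M. Y \<omega> \<le> t}" for t
  have Fsplit: "F t = q0 * cond_cdf M Y X 0 t + q * cond_cdf M Y X 1 t" for t
  proof -
    have "{\<omega>\<in>space M. Y \<omega> \<le> t} = {\<omega>\<in>space M. Y \<omega> \<le> t \<and> X \<omega> = 0} \<union> {\<omega>\<in>space M. Y \<omega> \<le> t \<and> X \<omega> = 1}"
      using assms(4) by auto
    then have "F t = measure M {\<omega>\<in>space M. Y \<omega> \<le> t \<and> X \<omega> = 0} + measure M {\<omega>\<in>space M. Y \<omega> \<le> t \<and> X \<omega> = 1}"
      unfolding F_def by (simp only:) (intro finite_measure_Union, auto)
    then show ?thesis using qpos qlt q0q unfolding cond_cdf_def q_def q0_def by simp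
  qed
  have Fcont: "continuous_on UNIV F"
    unfolding Fsplit[abs_def] using assms(7) by (intro continuous_intros) auto
  have Fmono: "F s \<le> F t" if "s \<le> t" for s t
    unfolding F_def using that by (intro finite_measure_mono) auto
  obtain c d where cd: "c < d" "{c<..<d} \<subseteq> supp_set M Y - T" using assms(10) by blast
  define c' where "c' = (2*c + d)/3"
  define d' where "d' = (c + 2*d)/3"
  have c'd': "c < c'" "c' < d'" "d' < d" using cd(1) unfolding c'_def d'_def by auto
  define g where "g x = (1-q) * (F x - F c') - q * (F d' - F x)" for x
  have gcont: "continuous_on UNIV g" unfolding g_def[abs_def] using Fcont
    by (intro continuous_intros) auto
  obtain m where m: "c' < m" "m < d'" "g m = 0"
  proof (cases "F d' = F c'")
    case True
    define m where "m = (c' + d')/2"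
    have "F c' \<le> F m" "F m \<le> F d'" using Fmono c'd' unfolding m_def by auto
    then have "g m = 0" using True unfolding g_def by simp
    moreover have "c' < m" "m < d'" using c'd' unfolding m_def by auto
    ultimately show ?thesis using that by blast
  next
    case False
    then have lt: "F c' < F d'" using Fmono[of c' d'] c'd' by auto
    have "g c' < 0" "0 < g d'" using lt qpos qlt unfolding g_def by auto
    moreover have "\<exists>x. c' \<le> x \<and> x \<le> d' \<and> g x = 0"
      using calculation c'd' gcont
      by (intro IVT) (auto simp: continuous_on_eq_continuous_at)
    ultimately show ?thesis using that by force
  qed
  define p where "p y = (if c' < y \<and> y \<le> m then 1 else if m < y \<and> y \<le> d' then 0 else q)" for y
  define A where "A t = {\<omega>\<in>space M. Y \<omega> \<le> t}" for t
  define S1 where "S1 = {\<omega>\<in>space M. c' < Y \<omega> \<and> Y \<omega> \<le> m}"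
  define S2 where "S2 = {\<omega>\<in>space M. m < Y \<omega> \<and> Y \<omega> \<le> d'}"
  have [measurable]: "A t \<in> sets M" "S1 \<in> sets M" "S2 \<in> sets M" for t
    unfolding A_def S1_def S2_def by measurable
  have mS1: "measure M S1 = F m - F c'"
  proof -
    have "S1 = A m - A c'" unfolding S1_def A_def by auto
    moreover have "A c' \<subseteq> A m" unfolding A_def using m by auto
    ultimately show ?thesis unfolding F_def A_def[symmetric] by (simp add: finite_measure_Diff)
  qed
  have mS2: "measure M S2 = F d' - F m"
  proof -
    have "S2 = A d' - A m" unfolding S2_def A_def by auto
    moreover have "A m \<subseteq> A d'" unfolding A_def using m by auto
    ultimately show ?thesis unfolding F_def A_def[symmetric] by (simp add: finite_measure_Diff)
  qed
  have key: "(1-q) * measure M S1 - q * measure M S2 = 0"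
    using m(3) unfolding mS1 mS2 g_def by simp
  have mA: "measure M (A t) = F t" for t unfolding A_def F_def by simp
  have int3: "(\<integral>\<omega>. a * indicator B \<omega> + b * indicator S1 \<omega> + e * indicator S2 \<omega> \<partial>M)
      = a * measure M B + b * measure M S1 + e * measure M S2" if [measurable]: "B \<in> sets M" for a b e :: real and B
  proof -
    have i: "integrable M (\<lambda>\<omega>. k * indicator C \<omega> :: real)" if "C \<in> sets M" for k C
      using that by (intro integrable_mult_right integrable_real_indicator) (auto simp: less_top[symmetric])
    have "(\<integral>\<omega>. a * indicator B \<omega> + b * indicator S1 \<omega> + e * indicator S2 \<omega> \<partial>M)
      = (\<integral>\<omega>. a * indicator B \<omega> + b * indicator S1 \<omega> \<partial>M) + (\<integral>\<omega>. e * indicator S2 \<omega> \<partial>M)"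
      by (intro Bochner_Integration.integral_add Bochner_Integration.integrable_add i) (auto simp: that)
    also have "(\<integral>\<omega>. a * indicator B \<omega> + b * indicator S1 \<omega> \<partial>M)
      = (\<integral>\<omega>. a * indicator B \<omega> \<partial>M) + (\<integral>\<omega>. b * indicator S1 \<omega> \<partial>M)"
      by (intro Bochner_Integration.integral_add i) (auto simp: that)
    finally show ?thesis using that by simp
  qed
  define p where "p y = (if c' < y \<and> y \<le> m then 1 else if m < y \<and> y \<le> d' then 0 else q)" for y
  have pm: "p \<in> borel_measurable borel" unfolding p_def by measurable
  have p01: "0 \<le> p y \<and> p y \<le> 1" for y unfolding p_def using qpos qlt by auto
  have "(\<integral>\<omega>. p (Y \<omega>) \<partial>M) = (\<integral>\<omega>. q * indicator (space M) \<omega> + (1-q) * indicator S1 \<omega> + (-q) * indicator S2 \<omega> \<partial>M)"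
    by (rule Bochner_Integration.integral_cong) (auto simp: p_def S1_def S2_def indicator_def)
  also have "\<dots> = q" using int3[of "space M" q "1-q" "-q"] key prob_space by simp
  finally have intp: "(\<integral>\<omega>. p (Y \<omega>) \<partial>M) = q" .
  have Tcase: "\<tau> \<le> c' \<or> d' \<le> \<tau>" if "\<tau> \<in> T" for \<tau>
  proof (rule ccontr)
    assume "\<not> ?thesis"
    then have "\<tau> \<in> {c<..<d}" using c'd' by auto
    then show False using cd(2) that by auto
  qed
  have indep: "latent_cdf0 M Y p q \<tau> = latent_cdf1 M Y p q \<tau>" if "\<tau> \<in> T" for \<tau>
  proof (cases "\<tau> \<le> c'")
    case True
    have "(\<integral>\<omega>. p (Y \<omega>) * indicator {..\<tau>} (Y \<omega>) \<partial>M) = (\<integral>\<omega>. q * indicator (A \<tau>) \<omega> + 0 * indicator S1 \<omega> + 0 * indicator S2 \<omega> \<partial>M)"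
      using True m by (intro Bochner_Integration.integral_cong) (auto simp: p_def A_def indicator_def)
    moreover have "(\<integral>\<omega>. (1 - p (Y \<omega>)) * indicator {..\<tau>} (Y \<omega>) \<partial>M) = (\<integral>\<omega>. (1-q) * indicator (A \<tau>) \<omega> + 0 * indicator S1 \<omega> + 0 * indicator S2 \<omega> \<partial>M)"
      using True m by (intro Bochner_Integration.integral_cong) (auto simp: p_def A_def indicator_def)
    ultimately show ?thesis unfolding latent_cdf0_def latent_cdf1_def
      using int3[of "A \<tau>" q 0 0] int3[of "A \<tau>" "1-q" 0 0] qpos qlt by simp
  next
    case False
    then have d: "d' \<le> \<tau>" using Tcase that by auto
    have "(\<integral>\<omega>. p (Y \<omega>) * indicator {..\<tau>} (Y \<omega>) \<partial>M) = (\<integral>\<omega>. q * indicator (A \<tau>) \<omega> + (1-q) * indicator S1 \<omega> + (-q) * indicator S2 \<omega> \<partial>M)"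
      using d m by (intro Bochner_Integration.integral_cong) (auto simp: p_def A_def S1_def S2_def indicator_def)
    moreover have "(\<integral>\<omega>. (1 - p (Y \<omega>)) * indicator {..\<tau>} (Y \<omega>) \<partial>M) = (\<integral>\<omega>. (1-q) * indicator (A \<tau>) \<omega> + (q-1) * indicator S1 \<omega> + q * indicator S2 \<omega> \<partial>M)"
      using d m by (intro Bochner_Integration.integral_cong) (auto simp: p_def A_def S1_def S2_def indicator_def)
    moreover have "(1 - q) * measure M (A \<tau>) + (q - 1) * measure M S1 + q * measure M S2 = (1-q) * measure M (A \<tau>)" using key by argo
    ultimately show ?thesis unfolding latent_cdf0_def latent_cdf1_def
      using int3[of "A \<tau>" q "1-q" "-q"] int3[of "A \<tau>" "1-q" "q-1" q] key qpos qlt by simp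
  qed
  have sub: "{c<..<d} \<subseteq> supp_set M Y" using cd(2) by auto
  have z: "{y\<in>supp_set M Y. p y = 0} = {m<..d'}"
    using sub m c'd' qpos unfolding p_def by auto
  have o: "{y\<in>supp_set M Y. p y = 1} = {c'<..m}"
    using sub m c'd' qlt unfolding p_def by auto
  show ?thesis
  proof (intro exI[of _ p] conjI)
    show "is_latent_pscore M Y (measure M {\<omega>\<in>space M. X \<omega> = 1}) p"
      unfolding is_latent_pscore_def q_def[symmetric] using pm p01 intp by auto
    show "latent_T_indep M Y (measure M {\<omega>\<in>space M. X \<omega> = 1}) p T"
      unfolding latent_T_indep_def q_def[symmetric] using indep by auto
    show "emeasure lborel {y\<in>supp_set M Y. p y = 0} > 0" unfolding z using m by simp
    show "emeasure lborel {y\<in>supp_set M Y. p y = 1} > 0" unfolding o using m by simp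
  qed
qed

end
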